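(* Let $A\subseteq\mathbb{R}$ be an open invex set with respect to $\eta:A\times A\to\mathbb{R}$ and let $a,b\in A$ with $a<a+\eta(b,a)$. Let $f:A\to\mathbb{R}$ be differentiable with $f'\in L[a,a+\eta(b,a)]$, and suppose $|f'|^q$ is preinvex on $A$ for some fixed $q>1$. Let $\frac1p+\frac1q=1$ and $\alpha>0$. Then \[ \left|\frac{f(a)+f(a+\eta(b,a))}{2}-\frac{\Gamma(\alpha+1)}{2\eta^{\alpha}(b,a)}\Big[J_{a^+}^{\alpha}f\big(a+\eta(b,a)\big)+J_{(a+\eta(b,a))^-}^{\alpha}f(a)\Big]\right|\le\frac{\eta(b,a)}{\alpha+1}\left(1-\frac{1}{2^{\alpha}}\right)\left[\frac{|f'(a)|^q+|f'(b)|^q}{2}\right]^{1/q}. \]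
   Context: A set $A\subseteq\mathbb{R}$ is invex with respect to $\eta:A\times A\to\mathbb{R}$ if $x+t\eta(y,x)\in A$ for all $x,y\in A$ and $t\in[0,1]$. A function $g$ on an invex set $A$ is preinvex with respect to $\eta$ if $g(x+t\eta(y,x))\le(1-t)g(x)+tg(y)$ for all $x,y\in A$, $t\in[0,1]$. For $g\in L[c,d]$ and $\alpha>0$, the Riemann–Liouville fractional integrals are $J_{c^+}^{\alpha}g(x)=\frac{1}{\Gamma(\alpha)}\int_c^x(x-t)^{\alpha-1}g(t)\,dt$ for $x>c$ and $J_{d^-}^{\alpha}g(x)=\frac{1}{\Gamma(\alpha)}\int_x^d(t-x)^{\alpha-1}g(t)\,dt$ for $x<d$; $\eta^{\alpha}(b,a)=(\eta(b,a))^{\alpha}$. *)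

theory Defs
  imports "HOL-Analysis.Analysis"
begin

definition invex_set :: "real set \<Rightarrow> (real \<Rightarrow> real \<Rightarrow> real) \<Rightarrow> bool" where
  "invex_set A \<eta> \<longleftrightarrow> (\<forall>x\<in>A. \<forall>y\<in>A. \<forall>t\<in>{0..1}. x + t * \<eta> y x \<in> A)"

definition preinvex_on :: "real set \<Rightarrow> (real \<Rightarrow> real \<Rightarrow> real) \<Rightarrow> (real \<Rightarrow> real) \<Rightarrow> bool" where
  "preinvex_on A \<eta> g \<longleftrightarrow>
     (\<forall>x\<in>A. \<forall>y\<in>A. \<forall>t\<in>{0..1}. g (x + t * \<eta> y x) \<le> (1 - t) * g x + t * g y)"

definition RL_left :: "real \<Rightarrow> real \<Rightarrow> (real \<Rightarrow> real) \<Rightarrow> real \<Rightarrow> real" where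
  "RL_left \<alpha> c g x = (1 / Gamma \<alpha>) * (LBINT t=c..x. (x - t) powr (\<alpha> - 1) * g t)"

definition RL_right :: "real \<Rightarrow> real \<Rightarrow> (real \<Rightarrow> real) \<Rightarrow> real \<Rightarrow> real" where
  "RL_right \<alpha> d g x = (1 / Gamma \<alpha>) * (LBINT t=x..d. (t - x) powr (\<alpha> - 1) * g t)"

end

theory Submission imports Defs begin

lemma der_cpow:
  assumes "x < c"
  shows "((\<lambda>x. (c-x) powr r) has_real_derivative (- (r * (c-x) powr (r-1)))) (at x)"
proof -
  have "((\<lambda>x. (c-x) powr r) has_real_derivative (r * (c-x) powr (r-1)) * (-1)) (at x)"
    by (rule DERIV_chain2[OF has_real_derivative_powr]) (use assms in \<open>auto intro!: derivative_eq_intros\<close>)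
  then show ?thesis by simp
qed

lemma der_apow:
  assumes "a < x"
  shows "((\<lambda>x. (x-a) powr r) has_real_derivative (r * (x-a) powr (r-1))) (at x)"
proof -
  have "((\<lambda>x. (x-a) powr r) has_real_derivative (r * (x-a) powr (r-1)) * 1) (at x)"
    by (rule DERIV_chain2[OF has_real_derivative_powr]) (use assms in \<open>auto intro!: derivative_eq_intros\<close>)
  then show ?thesis by simp
qed

lemma cont_cpow: "(r::real) > 0 \<Longrightarrow> continuous_on {a..c} (\<lambda>x. (c-x) powr r)"
  by (rule continuous_on_powr'[of _ "\<lambda>x::real. c-x" "\<lambda>x. r", simplified]) (auto intro!: continuous_intros)

lemma cont_apow: "(r::real) > 0 \<Longrightarrow> continuous_on {a..c} (\<lambda>x. (x-a) powr r)"
  by (rule continuous_on_powr'[of _ "\<lambda>x::real. x-a" "\<lambda>x. r", simplified]) (auto intro!: continuous_intros)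

lemma kern_c_int:
  fixes a c \<alpha> :: real
  assumes "a < c" "\<alpha> > 0"
  shows "((\<lambda>x. (c-x) powr (\<alpha>-1)) has_integral (c-a) powr \<alpha> / \<alpha>) {a..c}"
proof -
  have "((\<lambda>x. (c-x) powr (\<alpha>-1)) has_integral (- ((c-c) powr \<alpha>) / \<alpha> - (- ((c-a) powr \<alpha>) / \<alpha>))) {a..c}"
  proof (rule fundamental_theorem_of_calculus_interior[where f="\<lambda>x. - ((c-x) powr \<alpha>) / \<alpha>"])
    show "continuous_on {a..c} (\<lambda>x. - ((c-x) powr \<alpha>) / \<alpha>)"
      using cont_cpow[OF assms(2), of a c] assms by (auto intro!: continuous_on_divide continuous_on_minus)
    fix x assume x: "x \<in> {a<..<c}"
    have "((\<lambda>x. - ((c-x) powr \<alpha>) / \<alpha>) has_real_derivative (- (- (\<alpha> * (c-x) powr (\<alpha>-1))) / \<alpha>)) (at x)"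
      using x by (auto intro!: derivative_eq_intros der_cpow)
    then show "((\<lambda>x. - ((c-x) powr \<alpha>) / \<alpha>) has_vector_derivative (c-x) powr (\<alpha>-1)) (at x)"
      using assms by (simp add: has_real_derivative_iff_has_vector_derivative)
  qed (use assms in auto)
  then show ?thesis by simp
qed

lemma kern_a_int:
  fixes a c \<alpha> :: real
  assumes "a < c" "\<alpha> > 0"
  shows "((\<lambda>x. (x-a) powr (\<alpha>-1)) has_integral (c-a) powr \<alpha> / \<alpha>) {a..c}"
proof -
  have "((\<lambda>x. (x-a) powr (\<alpha>-1)) has_integral ((c-a) powr \<alpha> / \<alpha> - (a-a) powr \<alpha> / \<alpha>)) {a..c}"
  proof (rule fundamental_theorem_of_calculus_interior[where f="\<lambda>x. (x-a) powr \<alpha> / \<alpha>"])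
    show "continuous_on {a..c} (\<lambda>x. (x-a) powr \<alpha> / \<alpha>)"
      using cont_apow[OF assms(2), of a c] assms by (auto intro!: continuous_on_divide continuous_on_minus)
    fix x assume x: "x \<in> {a<..<c}"
    have "((\<lambda>x. (x-a) powr \<alpha> / \<alpha>) has_real_derivative ((\<alpha> * (x-a) powr (\<alpha>-1)) / \<alpha>)) (at x)"
      using x by (auto intro!: derivative_eq_intros der_apow)
    then show "((\<lambda>x. (x-a) powr \<alpha> / \<alpha>) has_vector_derivative (x-a) powr (\<alpha>-1)) (at x)"
      using assms by (simp add: has_real_derivative_iff_has_vector_derivative)
  qed (use assms in auto)
  then show ?thesis by simp
qed


lemma aux1: "(X::real) > 0 \<Longrightarrow> - (X*h)/((al+1)*X) = -h/(al+1)"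
  by (metis mult.commute nonzero_mult_div_cancel_left order_less_irrefl mult_divide_mult_cancel_left_if minus_divide_left times_divide_eq_left)

lemma aux2: "(X::real) > 0 \<Longrightarrow> Y > 0 \<Longrightarrow> al > 0 \<Longrightarrow> -(2*(X*h/(Y*2)))/((al+1)*X) = -h/((al+1)*Y)"
proof -
  assume "X > 0" "Y > 0" "al > 0"
  then have p: "(al+1)*X > 0" "(al+1)*Y > 0" by auto
  have "-(2*(X*h/(Y*2)))/((al+1)*X) = -(X*h/Y)/((al+1)*X)" by simp
  also have "\<dots> = -h/((al+1)*Y)" using p \<open>X>0\<close> \<open>Y>0\<close> by (simp add: divide_simps)
  finally show ?thesis .
qed

lemma aux3: "(Y::real) > 0 \<Longrightarrow> al > 0 \<Longrightarrow> 2*(-h/((al+1)*Y)) + 2*h/(al+1) = 2*h/(al+1)*(1-1/Y)"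
proof -
  assume "Y > 0" "al > 0"
  then have p: "(al+1)*Y > 0" "al+1 > 0" by auto
  then show ?thesis using \<open>Y>0\<close> by (simp add: divide_simps) (simp add: algebra_simps)
qed

definition KK :: "real \<Rightarrow> real \<Rightarrow> real \<Rightarrow> real \<Rightarrow> real" where
  "KK \<alpha> a c x = ((c-x) powr \<alpha> - (x-a) powr \<alpha>) / (c-a) powr \<alpha>"

lemma KK_cont: "a < c \<Longrightarrow> \<alpha> > 0 \<Longrightarrow> continuous_on {a..c} (KK \<alpha> a c)"
  unfolding KK_def using cont_cpow[of \<alpha> a c] cont_apow[of \<alpha> a c]
  by (intro continuous_on_divide continuous_on_diff) auto

lemma KK_sym: "KK \<alpha> a c (a+c-x) = - KK \<alpha> a c x"
  unfolding KK_def by (simp add: diff_divide_distrib)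

lemma reflect_ac:
  fixes g :: "real \<Rightarrow> real"
  assumes "(g has_integral i) {a..c}"
  shows "((\<lambda>x. g (a+c-x)) has_integral i) {a..c}"
proof -
  have "((\<lambda>x. g (-x)) has_integral i) {-c..-a}"
    using has_integral_reflect_lemma_real[OF assms] .
  then have "((\<lambda>x. g (-x)) has_integral i) (cbox (-c) (-a))" by simp
  from has_integral_affinity'[OF this, of 1 "-(a+c)"]
  show ?thesis by (simp add: algebra_simps)
qed

lemma KK_W:
  fixes a c \<alpha> :: real
  assumes "a < c" "\<alpha> > 0"
  shows "((\<lambda>x. \<bar>KK \<alpha> a c x\<bar>) has_integral 2*(c-a)/(\<alpha>+1)*(1 - 1/2 powr \<alpha>)) {a..c}"
proof -
  define h where "h = c - a"
  have h: "h > 0" using assms h_def by simp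
  define m where "m = (a+c)/2"
  define G where "G x = - ((c-x) powr (\<alpha>+1) + (x-a) powr (\<alpha>+1)) / ((\<alpha>+1) * h powr \<alpha>)" for x
  have contG: "continuous_on {u..v} G" if "a \<le> u" "v \<le> c" for u v
  proof -
    have "continuous_on {u..v} (\<lambda>x. (c-x) powr (\<alpha>+1))"
      by (rule continuous_on_powr') (use that assms in \<open>auto intro!: continuous_intros\<close>)
    moreover have "continuous_on {u..v} (\<lambda>x. (x-a) powr (\<alpha>+1))"
      by (rule continuous_on_powr') (use that assms in \<open>auto intro!: continuous_intros\<close>)
    ultimately show ?thesis unfolding G_def
      by (intro continuous_on_divide continuous_on_minus continuous_on_add continuous_on_const)
         (use h assms in auto)
  qed
  have derG: "(G has_vector_derivative KK \<alpha> a c x) (at x)" if "a < x" "x < c" for x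
  proof -
    have D: "(G has_real_derivative
       - ((- ((\<alpha>+1) * (c-x) powr (\<alpha>+1-1))) + (\<alpha>+1) * (x-a) powr (\<alpha>+1-1)) / ((\<alpha>+1) * h powr \<alpha>)) (at x)"
      unfolding G_def using that assms h
      by (auto intro!: derivative_eq_intros der_cpow der_apow)
    have "- ((- ((\<alpha>+1) * (c-x) powr (\<alpha>+1-1))) + (\<alpha>+1) * (x-a) powr (\<alpha>+1-1)) / ((\<alpha>+1) * h powr \<alpha>)
        = ((\<alpha>+1) * ((c-x) powr \<alpha> - (x-a) powr \<alpha>)) / ((\<alpha>+1) * h powr \<alpha>)"
      by (simp add: algebra_simps)
    also have "\<dots> = KK \<alpha> a c x"
      unfolding KK_def h_def using assms by simp
    finally have "- ((- ((\<alpha>+1) * (c-x) powr (\<alpha>+1-1))) + (\<alpha>+1) * (x-a) powr (\<alpha>+1-1)) / ((\<alpha>+1) * h powr \<alpha>)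
        = KK \<alpha> a c x" .
    with D show ?thesis by (simp add: has_real_derivative_iff_has_vector_derivative)
  qed
  have I1: "(KK \<alpha> a c has_integral (G m - G a)) {a..m}"
    by (rule fundamental_theorem_of_calculus_interior)
       (use contG[of a m] derG assms in \<open>auto simp: m_def\<close>)
  have I2: "(KK \<alpha> a c has_integral (G c - G m)) {m..c}"
    by (rule fundamental_theorem_of_calculus_interior)
       (use contG[of m c] derG assms in \<open>auto simp: m_def\<close>)
  have P1: "((\<lambda>x. \<bar>KK \<alpha> a c x\<bar>) has_integral (G m - G a)) {a..m}"
  proof (rule has_integral_eq[OF _ I1])
    fix x assume x: "x \<in> {a..m}"
    then have "(x-a) powr \<alpha> \<le> (c-x) powr \<alpha>"
      using assms m_def by (intro powr_mono2) auto
    then show "KK \<alpha> a c x = \<bar>KK \<alpha> a c x\<bar>"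
      unfolding KK_def using h h_def by simp
  qed
  have P2: "((\<lambda>x. \<bar>KK \<alpha> a c x\<bar>) has_integral - (G c - G m)) {m..c}"
  proof (rule has_integral_eq[OF _ has_integral_neg[OF I2]])
    fix x assume x: "x \<in> {m..c}"
    then have "(c-x) powr \<alpha> \<le> (x-a) powr \<alpha>"
      using assms m_def by (intro powr_mono2) auto
    then have "KK \<alpha> a c x \<le> 0"
      unfolding KK_def using h h_def by (intro divide_nonpos_pos) auto
    then show "- KK \<alpha> a c x = \<bar>KK \<alpha> a c x\<bar>" by simp
  qed
  have comb: "((\<lambda>x. \<bar>KK \<alpha> a c x\<bar>) has_integral (G m - G a) + - (G c - G m)) {a..c}"
    by (rule has_integral_combine[OF _ _ P1 P2]) (use assms m_def in auto)
  have hp: "h powr (\<alpha>+1) = h powr \<alpha> * h" using h by (simp add: powr_add)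
  have hpos: "h powr \<alpha> > 0" using h by simp
  have "G a = - (h powr (\<alpha>+1)) / ((\<alpha>+1) * h powr \<alpha>)"
    unfolding G_def using h_def assms by simp
  also have "\<dots> = - h / (\<alpha>+1)" unfolding hp using aux1[OF hpos] by simp
  finally have Ga: "G a = - h / (\<alpha>+1)" .
  have "G c = - (h powr (\<alpha>+1)) / ((\<alpha>+1) * h powr \<alpha>)"
    unfolding G_def using h_def assms by simp
  also have "\<dots> = - h / (\<alpha>+1)" unfolding hp using aux1[OF hpos] by simp
  finally have Gc: "G c = - h / (\<alpha>+1)" .
  note Ga Gc
  have Gm: "G m = - h / ((\<alpha>+1) * 2 powr \<alpha>)"
  proof -
    have cm: "c - m = h/2" and ma: "m - a = h/2" using m_def h_def by auto
    have "G m = - (2 * (h/2) powr (\<alpha>+1)) / ((\<alpha>+1) * h powr \<alpha>)" unfolding G_def cm ma by simp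
    also have "(h/2) powr (\<alpha>+1) = h powr \<alpha> * h / (2 powr \<alpha> * 2)"
      using h by (simp add: powr_add powr_divide)
    finally show ?thesis using aux2[OF hpos _ assms(2), of "2 powr \<alpha>" h] by simp
  qed
  have eqW: "(G m - G a) + - (G c - G m) = 2*(c-a)/(\<alpha>+1)*(1 - 1/2 powr \<alpha>)"
  proof -
    have Y: "(2::real) powr \<alpha> > 0" "\<alpha> + 1 > 0" using assms by auto
    have "2*(-h/((\<alpha>+1)*2 powr \<alpha>)) + 2*h/(\<alpha>+1) = 2*h/(\<alpha>+1)*(1-1/2 powr \<alpha>)"
      using aux3[OF Y(1) assms(2)] by simp
    then show ?thesis unfolding Ga Gc Gm h_def by simp
  qed
  show ?thesis by (subst eqW[symmetric]) (rule comb)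
qed

lemma KK_J:
  fixes a c \<alpha> :: real
  assumes "a < c" "\<alpha> > 0"
  shows "((\<lambda>x. \<bar>KK \<alpha> a c x\<bar> * (x-a)) has_integral (c-a)*((c-a)/(\<alpha>+1)*(1 - 1/2 powr \<alpha>))) {a..c}"
    and "((\<lambda>x. \<bar>KK \<alpha> a c x\<bar> * (c-x)) has_integral (c-a)*((c-a)/(\<alpha>+1)*(1 - 1/2 powr \<alpha>))) {a..c}"
proof -
  define W where "W = 2*(c-a)/(\<alpha>+1)*(1 - 1/2 powr \<alpha>)"
  have cK: "continuous_on {a..c} (\<lambda>x. \<bar>KK \<alpha> a c x\<bar>)"
    using KK_cont[OF assms] by (intro continuous_intros)
  have "(\<lambda>x. \<bar>KK \<alpha> a c x\<bar> * (x-a)) integrable_on {a..c}"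
    by (intro integrable_continuous_interval continuous_intros cK)
  then obtain J where J: "((\<lambda>x. \<bar>KK \<alpha> a c x\<bar> * (x-a)) has_integral J) {a..c}"
    by blast
  have J': "((\<lambda>x. \<bar>KK \<alpha> a c x\<bar> * (c-x)) has_integral J) {a..c}"
    using reflect_ac[OF J] by (simp add: KK_sym)
  have "((\<lambda>x. \<bar>KK \<alpha> a c x\<bar> * (x-a) + \<bar>KK \<alpha> a c x\<bar> * (c-x)) has_integral J + J) {a..c}"
    by (rule has_integral_add[OF J J'])
  moreover have "((\<lambda>x. \<bar>KK \<alpha> a c x\<bar> * (x-a) + \<bar>KK \<alpha> a c x\<bar> * (c-x)) has_integral (c-a) * W) {a..c}"
  proof -
    have "((\<lambda>x. (c-a) * \<bar>KK \<alpha> a c x\<bar>) has_integral (c-a) * W) {a..c}"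
      using has_integral_mult_right[OF KK_W[OF assms]] W_def by simp
    then show ?thesis by (rule has_integral_eq[rotated]) (simp add: algebra_simps)
  qed
  ultimately have "J + J = (c-a) * W" by (rule has_integral_unique)
  then have "J = (c-a)*W/2" by simp
  moreover have "\<And>Z. (c-a)*(2*(c-a)/(\<alpha>+1)*Z)/2 = (c-a)*((c-a)/(\<alpha>+1)*Z)"
    using assms by (simp add: field_simps)
  ultimately have "J = (c-a)*((c-a)/(\<alpha>+1)*(1 - 1/2 powr \<alpha>))" unfolding W_def by metis
  then show "((\<lambda>x. \<bar>KK \<alpha> a c x\<bar> * (x-a)) has_integral (c-a)*((c-a)/(\<alpha>+1)*(1 - 1/2 powr \<alpha>))) {a..c}"
    and "((\<lambda>x. \<bar>KK \<alpha> a c x\<bar> * (c-x)) has_integral (c-a)*((c-a)/(\<alpha>+1)*(1 - 1/2 powr \<alpha>))) {a..c}"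
    using J J' by auto
qed


lemma LBINT_HK:
  fixes g :: "real \<Rightarrow> real"
  assumes "a \<le> c" "g absolutely_integrable_on {a..c}"
    and meas: "(\<lambda>x. indicator {a..c} x *\<^sub>R g x) \<in> borel_measurable borel"
  shows "(LBINT x=a..c. g x) = integral {a..c} g"
proof -
  have "(LBINT x=a..c. g x) = (LBINT x : {a..c}. g x)"
    using assms(1) by (rule interval_integral_Icc)
  also have "\<dots> = (LINT x : {a..c} | lebesgue. g x)"
    unfolding set_lebesgue_integral_def
    by (rule integral_completion[symmetric]) (use meas in simp)
  also have "\<dots> = integral {a..c} g"
    using set_lebesgue_integral_eq_integral(2)[OF assms(2)] .
  finally show ?thesis .
qed

lemma lborel_abs:
  fixes g :: "real \<Rightarrow> real"
  assumes "set_integrable lborel S g"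
  shows "g absolutely_integrable_on S"
  using assms unfolding absolutely_integrable_on_def set_integrable_def
  by (subst integrable_completion) (auto intro: borel_measurable_integrable)

lemma young_pt:
  fixes u s p q :: real
  assumes "u \<ge> 0" "s > 0" "q > 1" "1/p + 1/q = 1"
  shows "u \<le> s/p + s powr (1-q) * u powr q / q"
proof -
  have p: "p > 1"
  proof -
    have "1/p = 1 - 1/q" using assms by simp
    moreover have "0 < 1 - 1/q" "1 - 1/q < 1" using assms by auto
    ultimately have "0 < 1/p" "1/p < 1" by auto
    then show ?thesis by (simp add: divide_less_eq split: if_splits)
  qed
  have "s powr (1/p) * (u * s powr (-(1/p))) \<le> (s powr (1/p)) powr p / p + (u * s powr (-(1/p))) powr q / q"
    by (rule Youngs_inequality) (use assms p in auto)
  moreover have "s powr (1/p) * (u * s powr (-(1/p))) = u"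
    using assms by (simp add: powr_minus field_simps)
  moreover have "(s powr (1/p)) powr p = s"
    using assms p by (simp add: powr_powr)
  moreover have "(u * s powr (-(1/p))) powr q = s powr (1-q) * u powr q"
  proof -
    have "(u * s powr (-(1/p))) powr q = u powr q * s powr (-(1/p) * q)"
      using assms by (simp add: powr_mult powr_powr)
    moreover have "-(1/p) * q = 1 - q"
    proof -
      have "1/p = 1 - 1/q" using assms by simp
      then have "-(1/p) * q = -(1 - 1/q) * q" by simp
      also have "\<dots> = 1 - q" using assms by (simp add: field_simps)
      finally show ?thesis .
    qed
    ultimately show ?thesis by simp
  qed
  ultimately show ?thesis by simp
qed


theorem theorem2p5:
  fixes A :: "real set" and \<eta> :: "real \<Rightarrow> real \<Rightarrow> real"
    and f f' :: "real \<Rightarrow> real" and a b p q \<alpha> :: real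
  assumes "open A" and "invex_set A \<eta>"
    and "a \<in> A" and "b \<in> A" and "a < a + \<eta> b a"
    and "\<And>x. x \<in> A \<Longrightarrow> (f has_real_derivative f' x) (at x)"
    and "set_integrable lborel {a..a + \<eta> b a} f'"
    and "q > 1" and "1 / p + 1 / q = 1"
    and "preinvex_on A \<eta> (\<lambda>x. \<bar>f' x\<bar> powr q)"
    and "\<alpha> > 0"
  shows "\<bar>(f a + f (a + \<eta> b a)) / 2
          - Gamma (\<alpha> + 1) / (2 * (\<eta> b a) powr \<alpha>)
            * (RL_left \<alpha> a f (a + \<eta> b a) + RL_right \<alpha> (a + \<eta> b a) f a)\<bar>
         \<le> \<eta> b a / (\<alpha> + 1) * (1 - 1 / 2 powr \<alpha>)
            * ((\<bar>f' a\<bar> powr q + \<bar>f' b\<bar> powr q) / 2) powr (1 / q)"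
proof -
  define h where "h = \<eta> b a"
  define c where "c = a + h"
  have hpos: "h > 0" using assms(5) h_def by simp
  have ac: "a < c" using hpos c_def by simp
  have ch: "c - a = h" using c_def by simp
  have al: "\<alpha> > 0" by (rule assms(11))
  have sub: "x \<in> A" if "x \<in> {a..c}" for x
  proof -
    have t: "(x-a)/h \<in> {0..1}" using that hpos c_def by (auto simp: divide_simps)
    have "a + ((x-a)/h) * \<eta> b a \<in> A"
      using assms(2,3,4) t unfolding invex_set_def by blast
    then show ?thesis using hpos h_def by simp
  qed
  have der: "(f has_real_derivative f' x) (at x)" if "x \<in> {a..c}" for x
    using assms(6) sub that by blast
  have contf: "continuous_on {a..c} f"
    using der by (intro continuous_at_imp_continuous_on ballI DERIV_isCont) auto
  have f'abs: "f' absolutely_integrable_on {a..c}"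
    using lborel_abs[OF assms(7)] c_def h_def by simp
  have fbd: "bounded (f ` {a..c})"
    using contf by (intro compact_imp_bounded compact_continuous_image) auto
  have fmeas: "f \<in> borel_measurable (lebesgue_on {a..c})"
    using contf by (rule continuous_imp_measurable_on_sets_lebesgue) auto
  define g1 where "g1 x = (c-x) powr (\<alpha>-1) * f x" for x
  define g2 where "g2 x = (x-a) powr (\<alpha>-1) * f x" for x
  define gK where "gK x = KK \<alpha> a c x * f' x" for x
  have g1abs: "g1 absolutely_integrable_on {a..c}"
  proof -
    have "(\<lambda>x. (c-x) powr (\<alpha>-1)) absolutely_integrable_on {a..c}"
      using kern_c_int[OF ac al] by (intro nonnegative_absolutely_integrable_1) auto
    from absolutely_integrable_bounded_measurable_product_real[OF fmeas _ fbd this]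
    show ?thesis unfolding g1_def by (simp add: mult.commute)
  qed
  have g2abs: "g2 absolutely_integrable_on {a..c}"
  proof -
    have "(\<lambda>x. (x-a) powr (\<alpha>-1)) absolutely_integrable_on {a..c}"
      using kern_a_int[OF ac al] by (intro nonnegative_absolutely_integrable_1) auto
    from absolutely_integrable_bounded_measurable_product_real[OF fmeas _ fbd this]
    show ?thesis unfolding g2_def by (simp add: mult.commute)
  qed
  have gKabs: "gK absolutely_integrable_on {a..c}"
  proof -
    have "KK \<alpha> a c \<in> borel_measurable (lebesgue_on {a..c})"
      using KK_cont[OF ac al] by (rule continuous_imp_measurable_on_sets_lebesgue) auto
    moreover have "bounded (KK \<alpha> a c ` {a..c})"
      using KK_cont[OF ac al] by (intro compact_imp_bounded compact_continuous_image) auto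
    ultimately show ?thesis
      using absolutely_integrable_bounded_measurable_product_real[OF _ _ _ f'abs] unfolding gK_def by auto
  qed
  define I1 where "I1 = integral {a..c} g1"
  define I2 where "I2 = integral {a..c} g2"
  define IK where "IK = integral {a..c} gK"
  have hI1: "(g1 has_integral I1) {a..c}"
    using set_lebesgue_integral_eq_integral(1)[OF g1abs] I1_def by auto
  have hI2: "(g2 has_integral I2) {a..c}"
    using set_lebesgue_integral_eq_integral(1)[OF g2abs] I2_def by auto
  have hIK: "(gK has_integral IK) {a..c}"
    using set_lebesgue_integral_eq_integral(1)[OF gKabs] IK_def by auto
  define H where "H = (c-a) powr \<alpha>"
  have Hpos: "H > 0" using ac H_def by simp
  have FTC: "((\<lambda>x. (- (\<alpha> * (c-x) powr (\<alpha>-1)) - \<alpha> * (x-a) powr (\<alpha>-1)) / H * f x + KK \<alpha> a c x * f' x)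
      has_integral (KK \<alpha> a c c * f c - KK \<alpha> a c a * f a)) {a..c}"
  proof (rule fundamental_theorem_of_calculus_interior[where f="\<lambda>x. KK \<alpha> a c x * f x"])
    show "continuous_on {a..c} (\<lambda>x. KK \<alpha> a c x * f x)"
      using KK_cont[OF ac al] contf by (intro continuous_on_mult)
    fix x assume x: "x \<in> {a<..<c}"
    have "((\<lambda>x. KK \<alpha> a c x * f x) has_real_derivative
       (- (\<alpha> * (c-x) powr (\<alpha>-1)) - \<alpha> * (x-a) powr (\<alpha>-1)) / H * f x + KK \<alpha> a c x * f' x) (at x)"
      unfolding KK_def H_def[symmetric] using x
      by (auto intro!: derivative_eq_intros der_cpow der_apow der simp: KK_def H_def add_divide_distrib mult.commute)
    then show "((\<lambda>x. KK \<alpha> a c x * f x) has_vector_derivative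
       (- (\<alpha> * (c-x) powr (\<alpha>-1)) - \<alpha> * (x-a) powr (\<alpha>-1)) / H * f x + KK \<alpha> a c x * f' x) (at x)"
      by (simp add: has_real_derivative_iff_has_vector_derivative)
  qed (use ac in auto)
  have KKa: "KK \<alpha> a c a = 1" unfolding KK_def using ac al by simp
  have KKc: "KK \<alpha> a c c = -1" unfolding KK_def using ac al by simp
  have FTC2: "((\<lambda>x. (-\<alpha>/H) * g1 x + (-\<alpha>/H) * g2 x + gK x) has_integral (-1 * f c - 1 * f a)) {a..c}"
  proof (rule has_integral_eq[OF _ FTC[unfolded KKa KKc]])
    fix x show "(- (\<alpha> * (c-x) powr (\<alpha>-1)) - \<alpha> * (x-a) powr (\<alpha>-1)) / H * f x + KK \<alpha> a c x * f' x
      = (-\<alpha>/H) * g1 x + (-\<alpha>/H) * g2 x + gK x"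
      unfolding g1_def g2_def gK_def using Hpos by (simp add: field_simps)
  qed
  have "((\<lambda>x. (-\<alpha>/H) * g1 x + (-\<alpha>/H) * g2 x + gK x) has_integral ((-\<alpha>/H) * I1 + (-\<alpha>/H) * I2 + IK)) {a..c}"
    by (intro has_integral_add has_integral_mult_right hI1 hI2 hIK)
  from has_integral_unique[OF this FTC2] have key: "(-\<alpha>/H) * I1 + (-\<alpha>/H) * I2 + IK = - f c - f a"
    by simp
  have meas1: "(\<lambda>x. indicator {a..c} x *\<^sub>R g1 x) \<in> borel_measurable borel"
  proof -
    have "(\<lambda>x. (c-x) powr (\<alpha>-1) * (indicator {a..c} x *\<^sub>R f x)) \<in> borel_measurable borel"
      using borel_measurable_continuous_on_indicator[OF _ contf] by measurable
    then show ?thesis unfolding g1_def by (simp add: mult.left_commute)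
  qed
  have meas2: "(\<lambda>x. indicator {a..c} x *\<^sub>R g2 x) \<in> borel_measurable borel"
  proof -
    have "(\<lambda>x. (x-a) powr (\<alpha>-1) * (indicator {a..c} x *\<^sub>R f x)) \<in> borel_measurable borel"
      using borel_measurable_continuous_on_indicator[OF _ contf] by measurable
    then show ?thesis unfolding g2_def by (simp add: mult.left_commute)
  qed
  have RL1: "RL_left \<alpha> a f (a + \<eta> b a) = 1 / Gamma \<alpha> * I1"
    unfolding RL_left_def I1_def h_def[symmetric] c_def[symmetric]
    using LBINT_HK[OF _ g1abs meas1] ac unfolding g1_def by simp
  have RL2: "RL_right \<alpha> (a + \<eta> b a) f a = 1 / Gamma \<alpha> * I2"
    unfolding RL_right_def I2_def h_def[symmetric] c_def[symmetric]
    using LBINT_HK[OF _ g2abs meas2] ac unfolding g2_def by simp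
  have Gp: "Gamma \<alpha> > 0" using al by (rule Gamma_real_pos)
  have E: "(f a + f (a + \<eta> b a)) / 2
          - Gamma (\<alpha> + 1) / (2 * (\<eta> b a) powr \<alpha>)
            * (RL_left \<alpha> a f (a + \<eta> b a) + RL_right \<alpha> (a + \<eta> b a) f a) = - IK / 2"
  proof -
    have e1: "Gamma (\<alpha> + 1) / (2 * (\<eta> b a) powr \<alpha>) * (1 / Gamma \<alpha> * I1 + 1 / Gamma \<alpha> * I2)
        = (\<alpha> / H * I1 + \<alpha> / H * I2) / 2"
    proof -
      have gg: "Gamma (\<alpha>+1) = \<alpha> * Gamma \<alpha>" by (rule Gamma_plus1) (use al in \<open>auto elim!: nonpos_Ints_cases\<close>)
      have X: "h powr \<alpha> > 0" using hpos by simp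
      show ?thesis unfolding H_def ch h_def[symmetric] gg using Gp X by (simp add: field_simps)
    qed
    have e2: "\<alpha> / H * I1 + \<alpha> / H * I2 = f c + f a + IK" using key by simp
    show ?thesis unfolding RL1 RL2 e1 e2 unfolding c_def h_def by (simp add: field_simps)
  qed
  define Aq where "Aq = \<bar>f' a\<bar> powr q"
  define Bq where "Bq = \<bar>f' b\<bar> powr q"
  define B where "B = (Aq + Bq) / 2"
  define Z where "Z = 1 - 1 / 2 powr \<alpha>"
  have Aq0: "Aq \<ge> 0" and Bq0: "Bq \<ge> 0" unfolding Aq_def Bq_def by auto
  have pre: "\<bar>f' x\<bar> powr q \<le> (c-x)/h*Aq + (x-a)/h*Bq" if x: "x \<in> {a..c}" for x
  proof -
    have t: "(x-a)/h \<in> {0..1}" using x hpos c_def by (auto simp: divide_simps)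
    have "\<bar>f' (a + (x-a)/h * \<eta> b a)\<bar> powr q \<le> (1 - (x-a)/h) * Aq + (x-a)/h * Bq"
      using assms(10,3,4) t unfolding preinvex_on_def Aq_def Bq_def by blast
    moreover have "a + (x-a)/h * \<eta> b a = x" using hpos h_def by simp
    moreover have "1 - (x-a)/h = (c-x)/h" using hpos c_def by (simp add: field_simps)
    ultimately show ?thesis by simp
  qed
  have goal: "\<bar>- IK / 2\<bar> \<le> h / (\<alpha> + 1) * Z * B powr (1/q)"
  proof (cases "B = 0")
    case True
    then have "Aq = 0" "Bq = 0" using Aq0 Bq0 B_def by auto
    then have "f' x = 0" if "x \<in> {a..c}" for x using pre[OF that] by simp
    then have "IK = integral {a..c} (\<lambda>x. 0)" unfolding IK_def gK_def
      by (intro integral_cong) simp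
    then show ?thesis using True by simp
  next
    case False
    then have Bp: "B > 0" using Aq0 Bq0 B_def by auto
    define s where "s = B powr (1/q)"
    have sp: "s > 0" using Bp s_def by simp
    have sq: "s powr q = B" using Bp assms(8) s_def by (simp add: powr_powr)
    define T where "T = s powr (1-q)"
    have TB: "T * B = s"
      unfolding T_def sq[symmetric] using sp by (simp add: powr_add[symmetric])
    have Tp: "T \<ge> 0" unfolding T_def by simp
    have qp: "q > 0" using assms(8) by simp
    define \<phi> where "\<phi> x = s/p * \<bar>KK \<alpha> a c x\<bar> + (T*Aq/(q*h)) * (\<bar>KK \<alpha> a c x\<bar>*(c-x))
        + (T*Bq/(q*h)) * (\<bar>KK \<alpha> a c x\<bar>*(x-a))" for x
    define W where "W = 2*(c-a)/(\<alpha>+1)*(1 - 1/2 powr \<alpha>)"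
    define J where "J = (c-a)*((c-a)/(\<alpha>+1)*(1 - 1/2 powr \<alpha>))"
    have JW: "J = h * W / 2" unfolding J_def W_def ch Z_def[symmetric] using al by (simp add: field_simps)
    have h\<phi>: "(\<phi> has_integral (s/p * W + (T*Aq/(q*h)) * J + (T*Bq/(q*h)) * J)) {a..c}"
      unfolding \<phi>_def W_def J_def
      by (intro has_integral_add has_integral_mult_right KK_W[OF ac al] KK_J[OF ac al])
    have bnd: "norm (gK x) \<le> \<phi> x" if x: "x \<in> {a..c}" for x
    proof -
      have "\<bar>f' x\<bar> \<le> s/p + T * \<bar>f' x\<bar> powr q / q"
        unfolding T_def by (rule young_pt) (use sp assms(8,9) in auto)
      also have "\<dots> \<le> s/p + T * ((c-x)/h*Aq + (x-a)/h*Bq) / q"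
        using pre[OF x] Tp qp by (intro add_left_mono divide_right_mono mult_left_mono) auto
      finally have "\<bar>KK \<alpha> a c x\<bar> * \<bar>f' x\<bar> \<le> \<bar>KK \<alpha> a c x\<bar> * (s/p + T * ((c-x)/h*Aq + (x-a)/h*Bq) / q)"
        by (intro mult_left_mono) auto
      also have "\<dots> = \<phi> x" unfolding \<phi>_def using hpos qp by (simp add: field_simps)
      finally show ?thesis unfolding gK_def by (simp add: abs_mult)
    qed
    have "norm IK \<le> integral {a..c} \<phi>"
      unfolding IK_def
      by (rule integral_norm_bound_integral) (use bnd hIK h\<phi> in auto)
    also have "integral {a..c} \<phi> = s * W"
    proof -
      have "integral {a..c} \<phi> = s/p * W + (T*Aq/(q*h)) * J + (T*Bq/(q*h)) * J"
        using h\<phi> by (rule integral_unique)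
      also have "\<dots> = s/p * W + (T*B) * W / q"
        unfolding JW B_def using hpos qp by (simp add: field_simps)
      also have "\<dots> = s * W * (1/p + 1/q)" unfolding TB by (simp add: field_simps)
      finally show ?thesis using assms(9) by simp
    qed
    finally have "\<bar>IK\<bar> \<le> s * W" by simp
    then have "\<bar>- IK / 2\<bar> \<le> s * W / 2" by simp
    also have "s * W / 2 = h / (\<alpha> + 1) * Z * B powr (1/q)"
      unfolding W_def ch Z_def[symmetric] s_def[symmetric] using al by (simp add: field_simps)
    finally show ?thesis .
  qed
  show ?thesis unfolding E using goal unfolding Z_def B_def Aq_def Bq_def h_def .
qed

end
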